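(* For $k\ge4$ and $n>k(k-1)$, $$\frac{n^k-k^3n^{k-2}}{k^k-k}\le g_k(n)\le\frac{n^k-n}{k^k-k}.$$
   Context: The function $g_k$ is defined by: $g_k(s)=0$ for $0\le s<k$, and for $s\ge k\ge 3$, $g_k(s)=\max\left(\sum_{i=1}^k g_k(s_i)+\prod_{i=1}^k s_i\right)$, the maximum over all partitions $s_1+\dots+s_k=s$ into nonnegative integers with $s_i<s$ for each $i$. *)

theory Defs
  imports Complex_Main
begin

definition parts :: "nat \<Rightarrow> nat \<Rightarrow> nat list set" where
  "parts k s = {xs. length xs = k \<and> sum_list xs = s \<and> (\<forall>x\<in>set xs. x < s)}"

declare image_cong [fundef_cong]

function g :: "nat \<Rightarrow> nat \<Rightarrow> nat" where
  "g k s = (if s < k then 0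
            else Max ((\<lambda>xs. sum_list (map (g k) xs) + prod_list xs) ` parts k s))"
  by pat_completeness auto
termination
  by (relation "measure snd") (auto simp: parts_def)

declare image_cong [fundef_cong del]

end

theory Submission
  imports Defs "HOL-Analysis.Analysis"
begin

lemma pow_sum_words:
  fixes x :: "nat \<Rightarrow> real"
  shows "(\<Sum>i<k. x i)^k = (\<Sum>w\<in>PiE {..<k} (\<lambda>_. {..<k}). \<Prod>j<k. x (w j))"
proof -
  have "(\<Sum>i<k. x i)^k = (\<Prod>j<k. \<Sum>i<k. x i)" by simp
  also have "\<dots> = (\<Sum>w\<in>PiE {..<k} (\<lambda>_. {..<k}). \<Prod>j<k. x (w j))"
    by (rule prod_sum_PiE) auto
  finally show ?thesis .
qed

lemma rot_inv: "a < k \<Longrightarrow> c < (k::nat) \<Longrightarrow> ((a + c) mod k + k - a) mod k = c"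
proof (cases "a + c < k")
  case True
  assume "c < k"
  then show ?thesis using True by simp
next
  case False
  assume "a < k" "c < k"
  then have "(a + c) mod k = a + c - k" using False by (simp add: mod_if)
  then show ?thesis using False \<open>a<k\<close> \<open>c<k\<close> by simp
qed

lemma prod_rot:
  fixes x :: "nat \<Rightarrow> real"
  assumes "a < k"
  shows "(\<Prod>c<k. x ((a + c) mod k)) = (\<Prod>i<k. x i)"
  by (rule prod.reindex_bij_witness[of _ "\<lambda>i. (i + k - a) mod k" "\<lambda>c. (a + c) mod k"])
     (use assms rot_inv in \<open>auto simp: mod_add_left_eq mod_add_right_eq\<close>)

lemma rot_inv2: "a < k \<Longrightarrow> c < (k::nat) \<Longrightarrow> ((a + c) mod k + (k - c)) mod k = a"
proof (cases "a + c < k")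
  case True
  assume "a < k" "c < k"
  then show ?thesis using True by simp
next
  case False
  assume "a < k" "c < k"
  then have "(a + c) mod k = a + c - k" using False by (simp add: mod_if)
  then show ?thesis using False \<open>a<k\<close> \<open>c<k\<close> by simp
qed
lemma rot_inv3: "a < k \<Longrightarrow> c < (k::nat) \<Longrightarrow> ((a + (k - c)) mod k + c) mod k = a"
proof (cases "c = 0")
  case True
  assume "a < k" then show ?thesis using True by simp
next
  case False
  assume a: "a < k" "c < k"
  then have "k - c < k" using False by simp
  from rot_inv2[OF a(1) this] show ?thesis using a by simp
qed
lemma mod_add_inj:
  assumes "a < k" "b < (k::nat)" "(a + d) mod k = (b + d) mod k" shows "a = b"
proof -
  have "d mod k < k" using assms(1) by simp
  moreover have "(a + d mod k) mod k = (b + d mod k) mod k"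
    using assms(3) by (simp add: mod_add_right_eq)
  ultimately show ?thesis using rot_inv2[of a k "d mod k"] rot_inv2[of b k "d mod k"] assms(1,2)
    by metis
qed

lemma main_ineq:
  fixes x :: "nat \<Rightarrow> real"
  assumes k: "k \<ge> 1" and nn: "\<And>i. i < k \<Longrightarrow> x i \<ge> 0"
  shows "(\<Sum>i<k. x i ^ k) + (real k ^ k - real k) * (\<Prod>i<k. x i) \<le> (\<Sum>i<k. x i)^k"
proof -
  define W where "W = PiE {..<k} (\<lambda>_. {..<k::nat})"
  define m where "m w = (\<Prod>j<k. x (w j))" for w
  define P where "P = (\<Prod>i<k. x i)"
  define sh where "sh c w = (\<lambda>j\<in>{..<k}. (w j + c) mod k)" for c and w :: "nat \<Rightarrow> nat"
  define NC where "NC = {w\<in>W. \<exists>j<k. \<exists>j'<k. w j \<noteq> w j'}"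
  define cw where "cw i = (\<lambda>j\<in>{..<k}. i)" for i :: nat
  have finW: "finite W" unfolding W_def by (simp add: finite_PiE)
  have cardW: "card W = k ^ k" unfolding W_def by (simp add: card_PiE)
  have Pnn: "P \<ge> 0" unfolding P_def using nn by (intro prod_nonneg) auto
  have cwW: "cw ` {..<k} \<subseteq> W" unfolding W_def cw_def by (auto simp: PiE_iff split: if_splits)
  have WNC: "W - NC = cw ` {..<k}"
  proof
    show "W - NC \<subseteq> cw ` {..<k}"
    proof
      fix w assume w: "w \<in> W - NC"
      then have "\<not> (\<exists>j<k. \<exists>j'<k. w j \<noteq> w j')" unfolding NC_def by blast
      moreover have "0 < k" using k by simp
      ultimately have eq: "\<And>j. j < k \<Longrightarrow> w j = w 0" by blast
      have "w \<in> W" using w by blast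
      then have "w 0 < k" using k unfolding W_def using PiE_mem by fastforce
      moreover have "w = cw (w 0)"
      proof
        fix j show "w j = cw (w 0) j"
        proof (cases "j < k")
          case True then show ?thesis using eq[of j] unfolding cw_def by simp
        next
          case False
          have "w j = undefined" using PiE_arb[of w "{..<k}" "\<lambda>_. {..<k}" j] \<open>w \<in> W\<close> False
            unfolding W_def by blast
          then show ?thesis using False unfolding cw_def by simp
        qed
      qed
      ultimately show "w \<in> cw ` {..<k}" by blast
    qed
  next
    show "cw ` {..<k} \<subseteq> W - NC"
    proof
      fix w assume "w \<in> cw ` {..<k}"
      then obtain i where i: "i < k" "w = cw i" by auto
      have "w \<in> W" using cwW i by auto
      moreover have "w \<notin> NC" unfolding NC_def i(2) cw_def by auto
      ultimately show "w \<in> W - NC" by blast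
    qed
  qed
  have injcw: "inj_on cw {..<k}"
  proof
    fix a b assume "a \<in> {..<k}" "b \<in> {..<k}" "cw a = cw b"
    then have "cw a 0 = cw b 0" by simp
    then show "a = b" using k unfolding cw_def by simp
  qed
  have cardC: "card (W - NC) = k" using WNC injcw by (simp add: card_image)
  have NCW: "NC \<subseteq> W" unfolding NC_def by auto
  have finNC: "finite NC" using finW NCW finite_subset by blast
  have cardNC: "card NC = k ^ k - k"
  proof -
    have "card (W - NC) = card W - card NC" by (rule card_Diff_subset[OF finNC NCW])
    moreover have "card NC \<le> card W" by (rule card_mono[OF finW NCW])
    ultimately show ?thesis using cardW cardC by linarith
  qed
  have sumC: "(\<Sum>w\<in>W - NC. m w) = (\<Sum>i<k. x i ^ k)"
  proof -
    have "(\<Sum>w\<in>W - NC. m w) = (\<Sum>w\<in>cw ` {..<k}. m w)" using WNC by simp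
    also have "\<dots> = (\<Sum>i<k. m (cw i))" using sum.reindex[OF injcw, of m] by simp
    also have "\<dots> = (\<Sum>i<k. x i ^ k)"
    proof (rule sum.cong[OF refl])
      fix i assume "i \<in> {..<k}"
      have "m (cw i) = (\<Prod>j<k. x i)" unfolding m_def cw_def by (rule prod.cong) auto
      then show "m (cw i) = x i ^ k" by simp
    qed
    finally show ?thesis .
  qed
  have sumW: "(\<Sum>w\<in>W. m w) = (\<Sum>i<k. x i)^k"
    unfolding W_def m_def by (rule pow_sum_words[symmetric])
  have split: "(\<Sum>w\<in>W. m w) = (\<Sum>w\<in>NC. m w) + (\<Sum>w\<in>W - NC. m w)"
    using finW NCW by (metis add.commute sum.subset_diff)
  have shNC: "(\<Sum>w\<in>NC. m (sh c w)) = (\<Sum>w\<in>NC. m w)" if c: "c < k" for c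
  proof (rule sum.reindex_bij_witness[of _ "sh (k - c)" "sh c"])
    fix w assume w: "w \<in> NC"
    show "sh (k - c) (sh c w) = w"
    proof
      fix j show "sh (k - c) (sh c w) j = w j"
      proof (cases "j < k")
        case True
        then have "w j < k" using w unfolding NC_def W_def by auto
        then show ?thesis using True c rot_inv2[of "w j" k c] unfolding sh_def
          by simp
      next
        case False then show ?thesis using w unfolding sh_def NC_def W_def
          by (auto simp: PiE_def extensional_def)
      qed
    qed
    show "sh c w \<in> NC"
    proof -
      obtain j j' where jj: "j < k" "j' < k" "w j \<noteq> w j'" using w unfolding NC_def by auto
      have "w j < k" "w j' < k" using w jj unfolding NC_def W_def by auto
      then have "(w j + c) mod k \<noteq> (w j' + c) mod k"
        using jj(3) mod_add_inj[of "w j" k "w j'" c] by blast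
      then have "sh c w j \<noteq> sh c w j'" unfolding sh_def using jj by simp
      moreover have "sh c w \<in> W" unfolding sh_def W_def using k by auto
      ultimately show ?thesis unfolding NC_def using jj by blast
    qed
  next
    fix w assume w: "w \<in> NC"
    show "sh c (sh (k - c) w) = w"
    proof
      fix j show "sh c (sh (k - c) w) j = w j"
      proof (cases "j < k")
        case True
        then have wj: "w j < k" using w unfolding NC_def W_def by auto
        have "((w j + (k - c)) mod k + c) mod k = w j" using rot_inv3[OF wj c] .
        then show ?thesis using True unfolding sh_def by simp
      next
        case False then show ?thesis using w unfolding sh_def NC_def W_def
          by (auto simp: PiE_def extensional_def)
      qed
    qed
    show "sh (k - c) w \<in> NC"
    proof -
      obtain j j' where jj: "j < k" "j' < k" "w j \<noteq> w j'" using w unfolding NC_def by auto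
      have "w j < k" "w j' < k" using w jj unfolding NC_def W_def by auto
      then have "(w j + (k - c)) mod k \<noteq> (w j' + (k - c)) mod k"
        using jj(3) mod_add_inj[of "w j" k "w j'" "k - c"] by blast
      then have "sh (k - c) w j \<noteq> sh (k - c) w j'" unfolding sh_def using jj by simp
      moreover have "sh (k - c) w \<in> W" unfolding sh_def W_def using k by auto
      ultimately show ?thesis unfolding NC_def using jj by blast
    qed
  qed simp
  have prodsh: "(\<Prod>c<k. m (sh c w)) = P ^ k" if w: "w \<in> W" for w
  proof -
    have "(\<Prod>c<k. m (sh c w)) = (\<Prod>c<k. \<Prod>j<k. x ((w j + c) mod k))"
      unfolding m_def sh_def by simp
    also have "\<dots> = (\<Prod>j<k. \<Prod>c<k. x ((w j + c) mod k))" by (rule prod.swap)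
    also have "\<dots> = (\<Prod>j<k. P)"
    proof (rule prod.cong[OF refl])
      fix j assume "j \<in> {..<k}"
      then have "w j < k" using w unfolding W_def by auto
      then show "(\<Prod>c<k. x ((w j + c) mod k)) = P" unfolding P_def by (rule prod_rot)
    qed
    finally show ?thesis by simp
  qed
  have amgm: "real k * P \<le> (\<Sum>c<k. m (sh c w))" if w: "w \<in> W" for w
  proof -
    have mnn: "\<And>c. m (sh c w) \<ge> 0" unfolding m_def using nn sh_def
      by (intro prod_nonneg) (auto simp: sh_def)
    have "(\<Prod>c<k. m (sh c w)) powr (1 / card {..<k::nat}) \<le> (\<Sum>c<k. m (sh c w) / card {..<k::nat})"
      by (rule arith_geom_mean) (use k mnn in \<open>auto simp: lessThan_empty_iff\<close>)
    moreover have "(\<Prod>c<k. m (sh c w)) powr (1 / card {..<k::nat}) = P"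
    proof (cases "P = 0")
      case True then show ?thesis using prodsh[OF w] k by simp
    next
      case False
      then have "P > 0" using Pnn by simp
      then show ?thesis using prodsh[OF w] k
        by (simp add: powr_realpow[symmetric] powr_powr)
    qed
    moreover have "(\<Sum>c<k. m (sh c w) / card {..<k::nat}) = (\<Sum>c<k. m (sh c w)) / k"
      by (simp add: sum_divide_distrib)
    ultimately have "P \<le> (\<Sum>c<k. m (sh c w)) / k" by simp
    moreover have "real k > 0" using k by simp
    ultimately show ?thesis by (metis mult.commute pos_le_divide_eq)
  qed
  have "real k * (\<Sum>w\<in>NC. m w) = (\<Sum>c<k. \<Sum>w\<in>NC. m (sh c w))"
    using shNC by simp
  also have "\<dots> = (\<Sum>w\<in>NC. \<Sum>c<k. m (sh c w))" by (rule sum.swap)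
  also have "\<dots> \<ge> (\<Sum>w\<in>NC. real k * P)"
    by (rule sum_mono) (use amgm NCW in auto)
  finally have "real k * (real (k ^ k - k) * P) \<le> real k * (\<Sum>w\<in>NC. m w)"
    using cardNC by (simp add: mult.left_commute)
  then have "real (k ^ k - k) * P \<le> (\<Sum>w\<in>NC. m w)" using k by simp
  moreover have "real (k ^ k - k) = real k ^ k - real k"
  proof -
    have "k \<le> k ^ k" using k by (simp add: self_le_power)
    then show ?thesis by (simp add: of_nat_diff)
  qed
  ultimately show ?thesis using split sumC sumW unfolding P_def by simp
qed

lemma tangent_pow:
  fixes x y :: real
  assumes "x > 0" "y \<ge> 0"
  shows "x ^ k + real k * x ^ (k - 1) * (y - x) \<le> y ^ k"
proof -
  define t where "t = (y - x) / x"
  have t1: "-1 \<le> t" using assms unfolding t_def by (simp add: field_simps)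
  have "1 + real k * t \<le> (1 + t) ^ k" by (rule Bernoulli_inequality[OF t1])
  then have "x ^ k * (1 + real k * t) \<le> x ^ k * (1 + t) ^ k"
    using assms by (intro mult_left_mono) auto
  moreover have "x ^ k * (1 + t) ^ k = y ^ k"
  proof -
    have "x * (1 + t) = y" using assms unfolding t_def by (simp add: field_simps)
    then show ?thesis by (metis power_mult_distrib)
  qed
  moreover have "x ^ k * (1 + real k * t) = x ^ k + real k * x ^ (k - 1) * (y - x)"
  proof (cases k)
    case 0 then show ?thesis by simp
  next
    case (Suc j)
    have xk: "x ^ k = x * x ^ (k - 1)" using Suc by simp
    have "x ^ k * (1 + real k * t) = x ^ k + real k * x ^ (k - 1) * (x * t)"
      unfolding xk by (simp add: algebra_simps)
    moreover have "x * t = y - x" using assms unfolding t_def by simp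
    ultimately show ?thesis by simp
  qed
  ultimately show ?thesis by simp
qed

lemma pow_ge_exp:
  fixes a :: real
  assumes "0 < 1 + a" "c \<le> ln (1 + a)"
  shows "exp (real r * c) \<le> (1 + a) ^ r"
proof -
  have "(1 + a) ^ r = exp (ln ((1 + a) ^ r))" using assms by simp
  also have "ln ((1 + a) ^ r) = real r * ln (1 + a)" using assms by (simp add: ln_realpow)
  finally show ?thesis using assms by (simp add: mult_left_mono)
qed

lemma div_le_helper: "(E::real) = N / D \<Longrightarrow> N \<le> M \<Longrightarrow> D > 0 \<Longrightarrow> E \<le> M / D"
  by (simp add: divide_right_mono)

lemma prod_lower:
  fixes k r :: nat and Q :: real
  assumes k4: "k \<ge> 4" and Q1: "Q \<ge> 1" and rk: "r < k"
  defines "x \<equiv> Q + real r / real k"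
  shows "x ^ k - real k / 2 * x ^ (k - 2) \<le> (Q + 1) ^ r * Q ^ (k - r)"
proof -
  define m where "m = k - r"
  have km: "real k = real r + real m" "k = r + m" using rk unfolding m_def by auto
  have kpos: "real k > 0" using k4 by simp
  have "real r / real k \<ge> 0" by simp
  then have x1: "x \<ge> 1" unfolding x_def using Q1 by linarith
  have xpos: "x > 0" using x1 by simp
  define a where "a = real m / (real k * x)"
  define b where "b = real r / (real k * x)"
  have a0: "a \<ge> 0" unfolding a_def using kpos xpos by simp
  have b0: "b \<ge> 0" unfolding b_def using kpos xpos by simp
  have mk: "real m \<le> real k" using km by simp
  have rk': "real r \<le> real k" using km by simp
  have a1: "a \<le> 1"
  proof -
    have "real m \<le> real k * x" using mk x1 kpos
      by (metis mult_le_cancel_left1 order_trans less_le_not_le)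
    then show ?thesis unfolding a_def using kpos xpos by (simp add: divide_le_eq_1)
  qed
  have b2: "b \<le> 1/2"
  proof -
    have "real k * x = real k * Q + real r" unfolding x_def using kpos by (simp add: field_simps)
    moreover have "real k * Q \<ge> real k" using Q1 kpos by simp
    ultimately have "2 * real r \<le> real k * x" using rk' by linarith
    then show ?thesis unfolding b_def using kpos xpos by (simp add: field_simps)
  qed
  have xa: "x * (1 + a) = Q + 1"
  proof -
    have "x * a = real m / real k" unfolding a_def using xpos by simp
    moreover have "real r / real k + real m / real k = 1"
      using km kpos by (simp flip: add_divide_distrib)
    moreover have "x * (1 + a) = x + x * a" by (simp add: algebra_simps)
    ultimately show ?thesis unfolding x_def by linarith
  qed
  have xb: "x * (1 - b) = Q"
  proof -
    have "x * b = real r / real k" unfolding b_def using xpos by simp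
    moreover have "x * (1 - b) = x - x * b" by (simp add: algebra_simps)
    ultimately show ?thesis unfolding x_def by linarith
  qed
  have la: "a - a\<^sup>2 \<le> ln (1 + a)" by (rule ln_one_plus_pos_lower_bound[OF a0 a1])
  have lb: "- b - 2 * b\<^sup>2 \<le> ln (1 + (- b))"
    using ln_one_minus_pos_lower_bound[OF b0 b2] by simp
  have pa: "exp (real r * (a - a\<^sup>2)) \<le> (1 + a) ^ r"
    by (rule pow_ge_exp) (use a0 la in auto)
  have pb: "exp (real m * (- b - 2 * b\<^sup>2)) \<le> (1 + (- b)) ^ m"
    by (rule pow_ge_exp) (use b2 lb in auto)
  define E where "E = real r * a\<^sup>2 + 2 * real m * b\<^sup>2"
  have ra_mb: "real r * a = real m * b" unfolding a_def b_def by simp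
  have expE: "exp (- E) \<le> (1 + a) ^ r * (1 - b) ^ m"
  proof -
    have "exp (- E) = exp (real r * (a - a\<^sup>2)) * exp (real m * (- b - 2 * b\<^sup>2))"
      unfolding E_def using ra_mb by (simp add: algebra_simps flip: exp_add)
    also have "\<dots> \<le> (1 + a) ^ r * (1 + (- b)) ^ m"
      using pa pb a0 by (intro mult_mono) auto
    finally show ?thesis by simp
  qed
  have E1: "1 - E \<le> exp (- E)" using exp_ge_add_one_self[of "- E"] by simp
  have Ebound: "E \<le> real k / (2 * x\<^sup>2)"
  proof -
    define D where "D = (real k * x)\<^sup>2"
    have Dpos: "D > 0" unfolding D_def using kpos xpos by simp
    have a2: "a\<^sup>2 = (real m)\<^sup>2 / D" unfolding a_def D_def by (simp add: power_divide)
    have b2': "b\<^sup>2 = (real r)\<^sup>2 / D" unfolding b_def D_def by (simp add: power_divide)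
    have "E = (real r * (real m)\<^sup>2 + 2 * real m * (real r)\<^sup>2) / D"
      unfolding E_def a2 b2' by (simp add: add_divide_distrib)
    moreover have "real r * (real m)\<^sup>2 + 2 * real m * (real r)\<^sup>2 \<le> real k ^ 3 / 2"
    proof -
      have e1: "(real r + real m)\<^sup>2 = (real r - real m)\<^sup>2 + 4 * (real r * real m)"
        by (simp add: power2_eq_square algebra_simps)
      have "0 \<le> (real r - real m)\<^sup>2" by simp
      then have "4 * (real r * real m) \<le> real k ^ 2" using e1 km(1) by simp
      moreover have "real m + 2 * real r \<le> 2 * real k" using km(1) by simp
      moreover have "real r * real m \<ge> 0" by simp
      moreover have "real m + 2 * real r \<ge> 0" by simp
      ultimately have "(4 * (real r * real m)) * (real m + 2 * real r) \<le> real k ^ 2 * (2 * real k)"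
        by (intro mult_mono) auto
      moreover have "(4 * (real r * real m)) * (real m + 2 * real r)
          = 4 * (real r * (real m)\<^sup>2 + 2 * real m * (real r)\<^sup>2)"
        by (simp add: power2_eq_square algebra_simps)
      moreover have "real k ^ 2 * (2 * real k) = 2 * real k ^ 3"
        by (simp add: power2_eq_square power3_eq_cube)
      ultimately have "4 * (real r * (real m)\<^sup>2 + 2 * real m * (real r)\<^sup>2) \<le> 2 * real k ^ 3"
        by metis
      then show ?thesis
        using divide_right_mono[of "4 * (real r * (real m)\<^sup>2 + 2 * real m * (real r)\<^sup>2)" "2 * real k ^ 3" 4]
        by simp
    qed
    ultimately have "E \<le> (real k ^ 3 / 2) / D"
      using Dpos div_le_helper by blast
    also have "\<dots> = real k / (2 * x\<^sup>2)" unfolding D_def using kpos xpos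
      by (simp add: power2_eq_square power3_eq_cube)
    finally show ?thesis .
  qed
  have xk: "x ^ k * ((1 + a) ^ r * (1 - b) ^ m) = (Q + 1) ^ r * Q ^ m"
  proof -
    have "x ^ k = x ^ r * x ^ m" using km(2) by (simp add: power_add)
    then have "x ^ k * ((1 + a) ^ r * (1 - b) ^ m) = (x * (1 + a)) ^ r * (x * (1 - b)) ^ m"
      by (simp only: power_mult_distrib mult_ac)
    then show ?thesis using xa xb by simp
  qed
  have "x ^ k * (1 - real k / (2 * x\<^sup>2)) \<le> x ^ k * (1 - E)"
    using Ebound xpos by (intro mult_left_mono) auto
  also have "\<dots> \<le> x ^ k * ((1 + a) ^ r * (1 - b) ^ m)"
    using E1 expE xpos by (intro mult_left_mono) auto
  finally have "x ^ k * (1 - real k / (2 * x\<^sup>2)) \<le> (Q + 1) ^ r * Q ^ m" using xk by simp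
  moreover have "x ^ k * (1 - real k / (2 * x\<^sup>2)) = x ^ k - real k / 2 * x ^ (k - 2)"
  proof -
    have "2 + (k - 2) = k" using k4 by simp
    then have "x ^ k = x\<^sup>2 * x ^ (k - 2)" by (metis power_add)
    then show ?thesis using xpos by (simp add: field_simps power2_eq_square)
  qed
  ultimately show ?thesis unfolding m_def by simp
qed

lemma pow_split: "a \<le> k \<Longrightarrow> (x::real) ^ k = x ^ a * x ^ (k - a)"
  by (metis le_add_diff_inverse power_add)

lemma key_real:
  fixes k q r :: nat
  assumes k4: "k \<ge> 4" and q1: "q \<ge> 1" and rk: "r < k"
  defines "n \<equiv> real (k * q + r)" and "K \<equiv> real k ^ k - real k" and "C \<equiv> real k ^ 3"
  shows "n ^ k - C * n ^ (k - 2) \<le>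
     real r * ((real q + 1) ^ k - C * (real q + 1) ^ (k - 2))
     + real (k - r) * (real q ^ k - C * real q ^ (k - 2))
     + K * ((real q + 1) ^ r * real q ^ (k - r))"
proof -
  define m where "m = k - r"
  define Q where "Q = real q"
  have Q1: "Q \<ge> 1" unfolding Q_def using q1 by simp
  have km: "real k = real r + real m" "k = r + m" using rk unfolding m_def by auto
  have kpos: "real k > 0" using k4 by simp
  define x where "x = Q + real r / real k"
  have nx: "n = real k * x" unfolding n_def x_def Q_def using kpos by (simp add: field_simps)
  have "real r / real k \<ge> 0" by simp
  then have x1: "x \<ge> 1" unfolding x_def using Q1 by linarith
  have xpos: "x > 0" using x1 by simp
  have npos: "n > 0" using nx kpos xpos by simp
  have tA1: "x ^ k + real k * x ^ (k - 1) * (Q + 1 - x) \<le> (Q + 1) ^ k"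
    by (rule tangent_pow) (use xpos Q1 in auto)
  have tA0: "x ^ k + real k * x ^ (k - 1) * (Q - x) \<le> Q ^ k"
    by (rule tangent_pow) (use xpos Q1 in auto)
  have sumA: "real r * (Q + 1 - x) + real m * (Q - x) = 0"
  proof -
    have "real r * (Q + 1 - x) + real m * (Q - x) = real k * Q + real r - real k * x"
      using km by (simp add: algebra_simps)
    also have "real k * x = real k * Q + real r" unfolding x_def using kpos by (simp add: algebra_simps)
    finally show ?thesis by simp
  qed
  have A: "real k * x ^ k \<le> real r * (Q + 1) ^ k + real m * Q ^ k"
  proof -
    have "real r * (x ^ k + real k * x ^ (k - 1) * (Q + 1 - x)) \<le> real r * (Q + 1) ^ k"
      using tA1 by (intro mult_left_mono) auto
    moreover have "real m * (x ^ k + real k * x ^ (k - 1) * (Q - x)) \<le> real m * Q ^ k"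
      using tA0 by (intro mult_left_mono) auto
    moreover have "real r * (x ^ k + real k * x ^ (k - 1) * (Q + 1 - x))
        + real m * (x ^ k + real k * x ^ (k - 1) * (Q - x))
        = real k * x ^ k + real k * x ^ (k - 1) * (real r * (Q + 1 - x) + real m * (Q - x))"
      using km by (simp add: algebra_simps)
    ultimately show ?thesis using sumA by simp
  qed
  have B: "x ^ k - real k / 2 * x ^ (k - 2) \<le> (Q + 1) ^ r * Q ^ m"
    using prod_lower[OF k4 Q1 rk] unfolding x_def m_def by simp
  have Kpos: "K \<ge> 0"
  proof -
    have "real k \<le> real k ^ k" using k4 by (simp add: self_le_power)
    then show ?thesis unfolding K_def by simp
  qed
  have B': "K * x ^ k - K * (real k / 2 * x ^ (k - 2)) \<le> K * ((Q + 1) ^ r * Q ^ m)"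
    using mult_left_mono[OF B Kpos] by (simp add: algebra_simps)
  have Cq: "real r * (Q + 1) ^ (k - 2) + real m * Q ^ (k - 2) \<le> (Q + 1) ^ (k - 3) * n"
  proof -
    have s: "k - 2 = Suc (k - 3)" using k4 by simp
    have e1: "(Q + 1) ^ (k - 2) = (Q + 1) ^ (k - 3) * (Q + 1)"
      unfolding s by (rule power_Suc2)
    have e0: "Q ^ (k - 2) = Q ^ (k - 3) * Q"
      unfolding s by (rule power_Suc2)
    have "Q ^ (k - 3) \<le> (Q + 1) ^ (k - 3)" using Q1 by (intro power_mono) auto
    then have "Q ^ (k - 3) * Q \<le> (Q + 1) ^ (k - 3) * Q" using Q1 by (intro mult_right_mono) auto
    then have "real m * Q ^ (k - 2) \<le> real m * ((Q + 1) ^ (k - 3) * Q)"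
      unfolding e0 by (intro mult_left_mono) auto
    moreover have "real r * (Q + 1) ^ (k - 3) * (Q + 1) + real m * ((Q + 1) ^ (k - 3) * Q)
        = (Q + 1) ^ (k - 3) * (real r * (Q + 1) + real m * Q)" by (simp add: algebra_simps)
    moreover have "real r * (Q + 1) + real m * Q = n"
      unfolding n_def Q_def using km by (simp add: algebra_simps)
    ultimately show ?thesis unfolding e1 by (simp add: mult.assoc)
  qed
  have D: "2 * (Q + 1) ^ (k - 3) \<le> n ^ (k - 3)"
  proof -
    have "4 * real q \<le> real k * real q" using k4 by (intro mult_right_mono) auto
    then have "n \<ge> 4 * Q" unfolding n_def Q_def by simp
    moreover have "2 * (Q + 1) \<le> 4 * Q" using Q1 by simp
    ultimately have n2: "2 * (Q + 1) \<le> n" by (rule order_trans[rotated])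
    have "2 * (Q + 1) ^ (k - 3) \<le> 2 ^ (k - 3) * (Q + 1) ^ (k - 3)"
    proof -
      have "(2::real) ^ 1 \<le> 2 ^ (k - 3)"
        by (rule power_increasing) (use k4 in auto)
      then have "(2::real) \<le> 2 ^ (k - 3)" by simp
      then show ?thesis using Q1 by (intro mult_right_mono) auto
    qed
    also have "\<dots> = (2 * (Q + 1)) ^ (k - 3)" by (simp only: power_mult_distrib)
    also have "\<dots> \<le> n ^ (k - 3)" using n2 Q1 by (intro power_mono) auto
    finally show ?thesis .
  qed
  have nk3: "n ^ (k - 3) * n = n ^ (k - 2)"
  proof -
    have s: "k - 2 = Suc (k - 3)" using k4 by simp
    show ?thesis unfolding s by (rule power_Suc2[symmetric])
  qed
  have Cpos: "C \<ge> 0" unfolding C_def by simp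
  have CD: "C * ((Q + 1) ^ (k - 3) * n) \<le> C * n ^ (k - 2) / 2"
  proof -
    have "(Q + 1) ^ (k - 3) * n \<le> (n ^ (k - 3) / 2) * n" using D npos
      by (intro mult_right_mono) auto
    then have "(Q + 1) ^ (k - 3) * n \<le> n ^ (k - 2) / 2" using nk3 by simp
    from mult_left_mono[OF this Cpos] show ?thesis by simp
  qed
  have CC: "C * (real r * (Q + 1) ^ (k - 2) + real m * Q ^ (k - 2)) \<le> C * ((Q + 1) ^ (k - 3) * n)"
    using Cq Cpos by (intro mult_left_mono) auto
  have Ebd: "K * (real k / 2 * x ^ (k - 2)) \<le> C * n ^ (k - 2) / 2"
  proof -
    have "K \<le> real k ^ k" unfolding K_def by simp
    then have "K * (real k * x ^ (k - 2)) \<le> real k ^ k * (real k * x ^ (k - 2))"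
      using xpos by (intro mult_right_mono) auto
    also have "real k ^ k * (real k * x ^ (k - 2)) = C * n ^ (k - 2)"
    proof -
      have "real k ^ k * real k = real k ^ 3 * real k ^ (k - 2)"
        using k4 pow_split[of 2 k "real k"] by (simp add: power2_eq_square power3_eq_cube)
      then show ?thesis unfolding C_def nx by (simp add: power_mult_distrib algebra_simps)
    qed
    finally show ?thesis by simp
  qed
  have nk: "n ^ k = K * x ^ k + real k * x ^ k" unfolding nx K_def by (simp add: power_mult_distrib algebra_simps)
  have Q_eq: "real q = Q" unfolding Q_def ..
  have expand: "real r * ((Q + 1) ^ k - C * (Q + 1) ^ (k - 2)) + real m * (Q ^ k - C * Q ^ (k - 2))
     + K * ((Q + 1) ^ r * Q ^ m)
     = (real r * (Q + 1) ^ k + real m * Q ^ k) - C * (real r * (Q + 1) ^ (k - 2) + real m * Q ^ (k - 2))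
     + K * ((Q + 1) ^ r * Q ^ m)" by (simp add: algebra_simps)
  have "n ^ k - C * n ^ (k - 2) \<le> real r * ((Q + 1) ^ k - C * (Q + 1) ^ (k - 2)) + real m * (Q ^ k - C * Q ^ (k - 2))
     + K * ((Q + 1) ^ r * Q ^ m)"
    unfolding expand using A B' CD CC Ebd nk by linarith
  then show ?thesis unfolding Q_eq m_def[symmetric] .
qed

definition val :: "nat \<Rightarrow> nat list \<Rightarrow> nat" where
  "val k xs = sum_list (map (g k) xs) + prod_list xs"

lemma parts_finite: "finite (parts k s)"
proof -
  have "parts k s \<subseteq> {xs. set xs \<subseteq> {..s} \<and> length xs = k}"
    unfolding parts_def by auto
  moreover have "finite {xs. set xs \<subseteq> {..s} \<and> length xs = k}"
    by (rule finite_lists_length_eq) simp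
  ultimately show ?thesis by (rule finite_subset)
qed

lemma g_unfold: "k \<le> s \<Longrightarrow> g k s = Max (val k ` parts k s)"
  by (subst g.simps) (simp add: val_def)

lemma g_small: "s < k \<Longrightarrow> g k s = 0"
  by (subst g.simps) simp

lemma g_ge: "k \<le> s \<Longrightarrow> xs \<in> parts k s \<Longrightarrow> val k xs \<le> g k s"
  unfolding g_unfold by (rule Max_ge) (use parts_finite in auto)

lemma g_le: "k \<le> s \<Longrightarrow> parts k s \<noteq> {} \<Longrightarrow> (\<And>xs. xs \<in> parts k s \<Longrightarrow> val k xs \<le> B) \<Longrightarrow> g k s \<le> B"
  unfolding g_unfold by (subst Max_le_iff) (use parts_finite in auto)

definition bal :: "nat \<Rightarrow> nat \<Rightarrow> nat list" where
  "bal k n = replicate (n mod k) (n div k + 1) @ replicate (k - n mod k) (n div k)"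

lemma bal_parts:
  assumes "2 \<le> k" "k \<le> n"
  shows "bal k n \<in> parts k n"
proof -
  have k0: "k > 0" using assms by simp
  have r: "n mod k < k" using k0 by simp
  have "k div k \<le> n div k" by (rule div_le_mono) (use assms in simp)
  then have q1: "n div k \<ge> 1" using k0 by simp
  have len: "length (bal k n) = k" unfolding bal_def using r by simp
  have "sum_list (bal k n) = (n mod k) * (n div k + 1) + (k - n mod k) * (n div k)"
    unfolding bal_def by (simp add: sum_list_replicate)
  also have "\<dots> = k * (n div k) + n mod k" using r by (simp add: algebra_simps diff_mult_distrib)
  also have "\<dots> = n" by simp
  finally have sum: "sum_list (bal k n) = n" .
  have a1: "2 * (n div k) \<le> k * (n div k)" using assms by simp
  have a2: "k * (n div k) + n mod k = n" by simp
  have lt1: "n div k < n" using a1 a2 q1 by linarith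
  have lt2: "n div k + 1 < n" if "n mod k > 0" using a1 a2 q1 that by linarith
  have "\<forall>x\<in>set (bal k n). x < n" unfolding bal_def using lt1 lt2 by auto
  then show ?thesis using len sum unfolding parts_def by simp
qed

lemma prod_list_nth: "prod_list (xs::nat list) = (\<Prod>i<length xs. xs ! i)"
  by (induction xs) (simp_all add: prod.lessThan_Suc_shift del: prod.lessThan_Suc)

lemma list_sums:
  assumes "length xs = k"
  shows "real (sum_list (map f xs)) = (\<Sum>i<k. real (f (xs ! i)))"
    and "real (sum_list xs) = (\<Sum>i<k. real (xs ! i))"
    and "real (prod_list xs) = (\<Prod>i<k. real (xs ! i))"
  using assms by (simp_all add: sum_list_sum_nth prod_list_nth atLeast0LessThan)

lemma upper_bound:
  assumes k: "k \<ge> 2"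
  shows "(real k ^ k - real k) * real (g k n) \<le> real n ^ k - real n"
proof (induction n rule: less_induct)
  case (less n)
  show ?case
  proof (cases "n < k")
    case True
    have "real n \<le> real n ^ k"
    proof (cases "n = 0")
      case True then show ?thesis using k by simp
    next
      case False
      then have "n \<le> n ^ k" using k by (simp add: self_le_power)
      then show ?thesis by (metis of_nat_le_iff of_nat_power)
    qed
    then show ?thesis using g_small[OF True] by simp
  next
    case False
    then have kn: "k \<le> n" by simp
    define K where "K = real k ^ k - real k"
    have Kpos: "K \<ge> 0"
    proof -
      have "real k \<le> real k ^ k" using k by (simp add: self_le_power)
      then show ?thesis unfolding K_def by simp
    qed
    have ne: "parts k n \<noteq> {}" using bal_parts[OF k kn] by blast
    have "g k n \<in> val k ` parts k n" unfolding g_unfold[OF kn]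
      by (rule Max_in) (use parts_finite ne in auto)
    then obtain xs where xs: "xs \<in> parts k n" and gxs: "g k n = val k xs" by blast
        have len: "length xs = k" and sxs: "sum_list xs = n" and lt: "\<forall>x\<in>set xs. x < n"
          using xs unfolding parts_def by auto
        define y where "y i = real (xs ! i)" for i
        have IH: "K * real (g k (xs ! i)) \<le> y i ^ k - y i" if "i < k" for i
          using less.IH[of "xs ! i"] lt len that unfolding y_def K_def by simp
        have "K * real (val k xs) = (\<Sum>i<k. K * real (g k (xs ! i))) + K * (\<Prod>i<k. y i)"
          unfolding val_def using list_sums[OF len] unfolding y_def
          by (simp add: sum_distrib_left algebra_simps)
        also have "\<dots> \<le> (\<Sum>i<k. y i ^ k - y i) + K * (\<Prod>i<k. y i)"
          using IH by (intro add_right_mono sum_mono) auto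
        also have "\<dots> = (\<Sum>i<k. y i ^ k) + K * (\<Prod>i<k. y i) - real n"
        proof -
          have "(\<Sum>i<k. y i) = real n" using list_sums(2)[OF len] sxs unfolding y_def by simp
          then show ?thesis by (simp add: sum_subtractf)
        qed
        also have "\<dots> \<le> (\<Sum>i<k. y i) ^ k - real n"
          using main_ineq[of k y] k unfolding K_def y_def by simp
        also have "(\<Sum>i<k. y i) = real n" using list_sums(2)[OF len] sxs unfolding y_def by simp
        finally show ?thesis unfolding gxs K_def .
  qed
qed

lemma lower_bound:
  assumes k: "k \<ge> 4"
  shows "real n ^ k - real k ^ 3 * real n ^ (k - 2) \<le> (real k ^ k - real k) * real (g k n)"
proof (induction n rule: less_induct)
  case (less n)
  define K where "K = real k ^ k - real k"
  define C where "C = real k ^ 3"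
  have Kpos: "K \<ge> 0"
  proof -
    have "real k \<le> real k ^ k" using k by (simp add: self_le_power)
    then show ?thesis unfolding K_def by simp
  qed
  show ?case
  proof (cases "n < k")
    case True
    have "real n ^ 2 \<le> real k ^ 2" using True by (intro power_mono) auto
    also have "real k ^ 2 \<le> real k ^ 3" using k by (intro power_increasing) auto
    finally have "real n ^ 2 * real n ^ (k - 2) \<le> real k ^ 3 * real n ^ (k - 2)"
      by (intro mult_right_mono) auto
    moreover have "real n ^ k = real n ^ 2 * real n ^ (k - 2)"
      using k by (intro pow_split) auto
    ultimately show ?thesis using g_small[OF True] by simp
  next
    case False
    then have kn: "k \<le> n" by simp
    define q where "q = n div k"
    define r where "r = n mod k"
    have k0: "k > 0" using k by simp
    have rk: "r < k" unfolding r_def using k0 by simp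
    have "k div k \<le> n div k" by (rule div_le_mono) (use kn in simp)
    then have q1: "q \<ge> 1" unfolding q_def using k0 by simp
    have nqr: "n = k * q + r" unfolding q_def r_def by simp
    have bp: "bal k n \<in> parts k n" using bal_parts[of k n] k kn by simp
    have "4 * q \<le> k * q" using k by simp
    then have qn: "q < n" and q1n: "r > 0 \<Longrightarrow> q + 1 < n" using nqr q1 by linarith+
    have IHq: "real q ^ k - C * real q ^ (k - 2) \<le> K * real (g k q)"
      using less.IH[OF qn] unfolding K_def C_def .
    have IHq1: "real r * ((real q + 1) ^ k - C * (real q + 1) ^ (k - 2)) \<le> real r * (K * real (g k (q + 1)))"
    proof (cases "r = 0")
      case True then show ?thesis by simp
    next
      case False
      then have h: "real (q + 1) ^ k - C * real (q + 1) ^ (k - 2) \<le> K * real (g k (q + 1))"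
        using less.IH[OF q1n] unfolding K_def C_def by blast
      then have "(real q + 1) ^ k - C * (real q + 1) ^ (k - 2) \<le> K * real (g k (q + 1))"
        by (simp only: of_nat_add of_nat_1)
      then show ?thesis by (intro mult_left_mono) auto
    qed
    have IHq': "real (k - r) * (real q ^ k - C * real q ^ (k - 2)) \<le> real (k - r) * (K * real (g k q))"
      using IHq by (intro mult_left_mono) auto
    have valeq: "real (val k (bal k n)) = real r * real (g k (q + 1)) + real (k - r) * real (g k q)
        + (real q + 1) ^ r * real q ^ (k - r)"
      unfolding val_def bal_def q_def[symmetric] r_def[symmetric]
      by (simp add: sum_list_replicate add.commute)
    have key: "real n ^ k - C * real n ^ (k - 2) \<le>
     real r * ((real q + 1) ^ k - C * (real q + 1) ^ (k - 2))
     + real (k - r) * (real q ^ k - C * real q ^ (k - 2))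
     + K * ((real q + 1) ^ r * real q ^ (k - r))"
      using key_real[OF k q1 rk] unfolding nqr K_def C_def by simp
    also have "\<dots> \<le> real r * (K * real (g k (q + 1))) + real (k - r) * (K * real (g k q))
     + K * ((real q + 1) ^ r * real q ^ (k - r))"
      using IHq1 IHq' by linarith
    also have "\<dots> = K * real (val k (bal k n))" unfolding valeq by (simp add: algebra_simps)
    also have "\<dots> \<le> K * real (g k n)"
      using g_ge[OF kn bp] Kpos by (intro mult_left_mono) auto
    finally show ?thesis unfolding K_def C_def .
  qed
qed

theorem lemma4p6:
  fixes k n :: nat
  assumes "k \<ge> 4" and "n > k * (k - 1)"
  shows "(real n ^ k - real k ^ 3 * real n ^ (k - 2)) / (real k ^ k - real k) \<le> real (g k n)
       \<and> real (g k n) \<le> (real n ^ k - real n) / (real k ^ k - real k)"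
proof -
  have "k ^ 2 \<le> k ^ k" using assms(1) by (intro power_increasing) auto
  moreover have "k * 1 < k * k" by (rule mult_strict_left_mono) (use assms(1) in auto)
  ultimately have "k < k ^ k" unfolding power2_eq_square by linarith
  then have "real k < real k ^ k" by (metis of_nat_less_iff of_nat_power)
  then have Kpos: "real k ^ k - real k > 0" by simp
  have L: "real n ^ k - real k ^ 3 * real n ^ (k - 2) \<le> (real k ^ k - real k) * real (g k n)"
    using lower_bound[OF assms(1)] .
  have U: "(real k ^ k - real k) * real (g k n) \<le> real n ^ k - real n"
    using upper_bound[of k n] assms(1) by simp
  show ?thesis using L U Kpos by (simp add: pos_divide_le_eq pos_le_divide_eq mult.commute)
qed

end
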